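(* Let $X$ be a Banach space as described in the context and let $K\subset\mathbb{D}$ be compact. Then there is a constant $C$ (depending on $K$ but not on $f$ or $z$) such that for every $f\in X$ and every $z\in K$, $$|f(z)|\le C\|f\| .$$
   Context: $\mathbb{D}=\{z\in\mathbb{C}:|z|<1\}$. $X$ is a complex Banach space of functions analytic in $\mathbb{D}$ whose norm $\|\cdot\|$ satisfies: (i) $\|f(\cdot\, e^{it})\|=\|f(\cdot)\|$ for all $t\in\mathbb{R}$ and $f\in X$; (ii) $\|f\|<\infty$ for every entire function $f$; (iii) for all $f\in X$ and $g\in L[0,2\pi]$, $\big\|\frac{1}{2\pi}\int_0^{2\pi} f(ze^{it})g(t)\,dt\big\|\le \frac{1}{2\pi}\int_0^{2\pi}|g(t)|\,dt\cdot\|f\|$. *)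

theory Defs
  imports "HOL-Analysis.Analysis"
begin

text \<open>Convention: a function analytic in the unit disc D is represented by a total
function complex \<Rightarrow> complex which is holomorphic on D and vanishes outside D.\<close>

definition vanishes_off_disc :: "(complex \<Rightarrow> complex) \<Rightarrow> bool" where
  "vanishes_off_disc f \<longleftrightarrow> (\<forall>z. z \<notin> ball 0 1 \<longrightarrow> f z = 0)"

definition restrict_disc :: "(complex \<Rightarrow> complex) \<Rightarrow> complex \<Rightarrow> complex" where
  "restrict_disc f = (\<lambda>z. if z \<in> ball 0 1 then f z else 0)"

definition banach_fun_space :: "(complex \<Rightarrow> complex) set \<Rightarrow> ((complex \<Rightarrow> complex) \<Rightarrow> real) \<Rightarrow> bool" where
  "banach_fun_space X N \<longleftrightarrow>
     (\<lambda>z. 0) \<in> X \<and>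
     (\<forall>f\<in>X. \<forall>g\<in>X. (\<lambda>z. f z + g z) \<in> X) \<and>
     (\<forall>f\<in>X. \<forall>c::complex. (\<lambda>z. c * f z) \<in> X) \<and>
     (\<forall>f\<in>X. N f \<ge> 0) \<and>
     (\<forall>f\<in>X. N f = 0 \<longleftrightarrow> f = (\<lambda>z. 0)) \<and>
     (\<forall>f\<in>X. \<forall>c::complex. N (\<lambda>z. c * f z) = norm c * N f) \<and>
     (\<forall>f\<in>X. \<forall>g\<in>X. N (\<lambda>z. f z + g z) \<le> N f + N g) \<and>
     (\<forall>F::nat \<Rightarrow> complex \<Rightarrow> complex. (\<forall>n. F n \<in> X) \<longrightarrow>
        (\<forall>e>0. \<exists>M. \<forall>m\<ge>M. \<forall>n\<ge>M. N (\<lambda>z. F m z - F n z) < e) \<longrightarrow>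
        (\<exists>f\<in>X. (\<lambda>n. N (\<lambda>z. F n z - f z)) \<longlonglongrightarrow> 0))"

definition admissible_space :: "(complex \<Rightarrow> complex) set \<Rightarrow> ((complex \<Rightarrow> complex) \<Rightarrow> real) \<Rightarrow> bool" where
  "admissible_space X N \<longleftrightarrow>
     banach_fun_space X N \<and>
     (\<forall>f\<in>X. f holomorphic_on ball 0 1 \<and> vanishes_off_disc f) \<and>
     \<comment> \<open>(i) rotation invariance\<close>
     (\<forall>f\<in>X. \<forall>t::real. (\<lambda>z. f (z * exp (\<i> * t))) \<in> X \<and> N (\<lambda>z. f (z * exp (\<i> * t))) = N f) \<and>
     \<comment> \<open>(ii) entire functions belong to X\<close>
     (\<forall>f. f holomorphic_on UNIV \<longrightarrow> restrict_disc f \<in> X) \<and>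
     \<comment> \<open>(iii) convolution with L^1 functions\<close>
     (\<forall>f\<in>X. \<forall>g::real \<Rightarrow> complex. set_integrable lborel {0..2*pi} g \<longrightarrow>
        (\<lambda>z. (1 / (2*pi)) * (LINT t:{0..2*pi}|lborel. f (z * exp (\<i> * t)) * g t)) \<in> X \<and>
        N (\<lambda>z. (1 / (2*pi)) * (LINT t:{0..2*pi}|lborel. f (z * exp (\<i> * t)) * g t))
          \<le> (1 / (2*pi)) * (LINT t:{0..2*pi}|lborel. norm (g t)) * N f)"

end

theory Submission
  imports Defs "HOL-Complex_Analysis.Complex_Analysis"
begin

lemma coeff_has_integral01:
  assumes holf: "f holomorphic_on ball 0 1" and z: "norm z < 1"
  shows "((\<lambda>x::real. 2*pi*\<i> * (f (z * exp (2*pi*\<i>*x)) * exp (-(of_nat n * (2*pi*\<i>*x)))))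
           has_integral (2*pi*\<i> * (z^n * ((deriv^^n) f 0 / fact n)))) {0..1}"
proof -
  define S where "S = (\<lambda>u. z*u) -` ball 0 1"
  have oS: "open S" unfolding S_def
    by (intro open_vimage continuous_intros) auto
  have cS: "cball 0 1 \<subseteq> S"
  proof
    fix u :: complex assume "u \<in> cball 0 1"
    then have "norm u \<le> 1" by auto
    then have "norm (z*u) \<le> norm z" by (simp add: norm_mult mult_left_le)
    then show "u \<in> S" using z by (simp add: S_def)
  qed
  have hS: "(\<lambda>u. f (z*u)) holomorphic_on S"
    by (rule holomorphic_on_compose[where g=f, unfolded o_def])
       (auto intro!: holomorphic_intros holomorphic_on_subset[OF holf] simp: S_def)
  have "((\<lambda>u. f (z*u) / (u-0) ^ (Suc n)) has_contour_integral ((2 * pi * \<i>) / (fact n) * (deriv ^^ n) (\<lambda>u. f (z*u)) 0))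
           (circlepath 0 1)"
    apply (rule Cauchy_has_contour_integral_higher_derivative_circlepath)
    using cS hS holomorphic_on_imp_continuous_on holomorphic_on_subset ball_subset_cball
      continuous_on_subset apply blast
    using cS hS holomorphic_on_subset ball_subset_cball apply blast
    by simp
  moreover have "(deriv ^^ n) (\<lambda>u. f (z*u)) 0 = z^n * (deriv^^n) f 0"
    using higher_deriv_compose_linear[OF holf oS, of 0 z n] cS by (auto simp: S_def)
  ultimately have *: "((\<lambda>u. f (z*u) / u ^ (Suc n)) has_contour_integral ((2 * pi * \<i>) / (fact n) * (z^n * (deriv^^n) f 0)))
           (circlepath 0 1)" by simp
  show ?thesis
    using * unfolding has_contour_integral_def
    apply (subst (asm) has_integral_cong[where g = "\<lambda>x::real. 2*pi*\<i> * (f (z * exp (2*pi*\<i>*x)) * exp (-(of_nat n * (2*pi*\<i>*x))))"])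
    subgoal for x
      apply (subst vector_derivative_circlepath01, simp, simp)
      apply (simp add: circlepath exp_minus exp_of_nat_mult[symmetric])
      apply (simp add: field_simps exp_of_nat_mult power_Suc)
      done
    apply simp
    done
qed

lemma coeff_has_integral:
  fixes f :: "complex \<Rightarrow> complex" and z :: complex
  assumes holf: "f holomorphic_on ball 0 1" and z: "norm z < 1"
  shows "((\<lambda>t::real. f (z * exp (\<i> * t)) * exp (-(\<i> * of_nat n * t)))
           has_integral (2*pi) * (z^n * ((deriv^^n) f 0 / fact n))) {0..2*pi}"
proof -
  have h1: "((\<lambda>x::real. f (z * exp (2*pi*\<i>*x)) * exp (-(of_nat n * (2*pi*\<i>*x))))
           has_integral (z^n * ((deriv^^n) f 0 / fact n))) (cbox 0 1)"
    using has_integral_mult_left[OF coeff_has_integral01[OF holf z, of n], of "1/(2*pi*\<i>)"]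
    by (simp add: cbox_interval)
  note h2 = has_integral_affinity'[OF h1, of "1/(2*pi)" 0]
  show ?thesis
    using h2
    apply (simp add: cbox_interval)
    apply (subst (asm) has_integral_cong[where g = "\<lambda>t::real. f (z * exp (\<i> * t)) * exp (-(\<i> * of_nat n * t))"])
    subgoal for x by (simp add: field_simps)
    apply (simp add: field_simps scaleR_conv_of_real)
    done
qed

lemma coeff_LINT:
  fixes f :: "complex \<Rightarrow> complex" and z :: complex
  assumes holf: "f holomorphic_on ball 0 1" and z: "norm z < 1"
  shows "set_integrable lborel {0..2*pi} (\<lambda>t::real. f (z * exp (\<i> * t)) * exp (-(\<i> * of_nat n * t)))"
    "(1 / (2*pi)) * (LINT t:{0..2*pi}|lborel. f (z * exp (\<i> * t)) * exp (-(\<i> * of_nat n * t)))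
      = (deriv^^n) f 0 / fact n * z^n"
proof -
  have cf: "continuous_on (ball 0 1) f" using holf holomorphic_on_imp_continuous_on by blast
  have "continuous_on {0..2*pi} (\<lambda>t::real. f (z * exp (\<i> * t)))"
    apply (rule continuous_on_compose2[OF cf])
    apply (intro continuous_intros)
    using z by (auto simp: norm_mult)
  then have "continuous_on {0..2*pi} (\<lambda>t::real. f (z * exp (\<i> * t)) * exp (-(\<i> * of_nat n * t)))"
    by (intro continuous_intros)
  then show si: "set_integrable lborel {0..2*pi} (\<lambda>t::real. f (z * exp (\<i> * t)) * exp (-(\<i> * of_nat n * t)))"
    unfolding set_integrable_def by (intro borel_integrable_compact) auto
  show "(1 / (2*pi)) * (LINT t:{0..2*pi}|lborel. f (z * exp (\<i> * t)) * exp (-(\<i> * of_nat n * t)))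
      = (deriv^^n) f 0 / fact n * z^n"
    using set_borel_integral_eq_integral(2)[OF si] integral_unique[OF coeff_has_integral[OF holf z, of n]]
    by simp
qed
definition ecoef :: "(complex \<Rightarrow> complex) \<Rightarrow> nat \<Rightarrow> complex" where
  "ecoef f n = (deriv^^n) f 0 / fact n"

definition emon :: "nat \<Rightarrow> complex \<Rightarrow> complex" where
  "emon n = restrict_disc (\<lambda>z. z^n)"

lemma proj:
  assumes adm: "admissible_space X N" and f: "f \<in> X"
  shows "(\<lambda>z. ecoef f n * emon n z) \<in> X" "N (\<lambda>z. ecoef f n * emon n z) \<le> N f"
proof -
  have holf: "f holomorphic_on ball 0 1" and van: "vanishes_off_disc f"
    using adm f unfolding admissible_space_def by auto
  have conv: "\<And>g. set_integrable lborel {0..2*pi} g \<Longrightarrow>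
        (\<lambda>z. (1 / (2*pi)) * (LINT t:{0..2*pi}|lborel. f (z * exp (\<i> * t)) * g t)) \<in> X \<and>
        N (\<lambda>z. (1 / (2*pi)) * (LINT t:{0..2*pi}|lborel. f (z * exp (\<i> * t)) * g t))
          \<le> (1 / (2*pi)) * (LINT t:{0..2*pi}|lborel. norm (g t)) * N f"
    using adm f unfolding admissible_space_def by blast
  define g where "g = (\<lambda>t::real. exp (-(\<i> * of_nat n * of_real t)))"
  have "continuous_on {0..2*pi} g" unfolding g_def by (intro continuous_intros)
  then have gi: "set_integrable lborel {0..2*pi} g"
    unfolding set_integrable_def by (intro borel_integrable_compact) auto
  have "(LINT t:{0..2*pi}|lborel. norm (g t)) = (LINT t:{0..2*pi}|lborel. (1::real))"
    unfolding g_def by (simp add: norm_exp_eq_Re)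
  also have "\<dots> = 2*pi" by (subst set_integral_const) auto
  finally have ng: "(LINT t:{0..2*pi}|lborel. norm (g t)) = 2*pi" .
  have eq: "(\<lambda>z. (1/(2*pi)) * (LINT t:{0..2*pi}|lborel. f (z * exp (\<i> * t)) * g t)) = (\<lambda>z. ecoef f n * emon n z)"
  proof
    fix z :: complex
    show "(1/(2*pi)) * (LINT t:{0..2*pi}|lborel. f (z * exp (\<i> * t)) * g t) = ecoef f n * emon n z"
    proof (cases "norm z < 1")
      case True
      then show ?thesis using coeff_LINT(2)[OF holf True, of n]
        by (simp add: g_def ecoef_def emon_def restrict_disc_def)
    next
      case False
      have "\<And>t::real. f (z * exp (\<i> * t)) = 0"
        using van False unfolding vanishes_off_disc_def by (auto simp: norm_mult)
      then show ?thesis using False by (simp add: emon_def restrict_disc_def)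
    qed
  qed
  show "(\<lambda>z. ecoef f n * emon n z) \<in> X" "N (\<lambda>z. ecoef f n * emon n z) \<le> N f"
    using conv[OF gi] unfolding eq ng by auto
qed

lemma emon_in: assumes adm: "admissible_space X N" shows "emon n \<in> X"
proof -
  have "(\<lambda>z::complex. z^n) holomorphic_on UNIV" by (intro holomorphic_intros)
  then show ?thesis using adm unfolding admissible_space_def emon_def by blast
qed

lemma emon_pos: assumes adm: "admissible_space X N" shows "N (emon n) > 0"
proof -
  have b: "banach_fun_space X N" using adm unfolding admissible_space_def by blast
  have "emon n (1/2) \<noteq> 0" by (simp add: emon_def restrict_disc_def)
  then have "emon n \<noteq> (\<lambda>z. 0)" by metis
  then show ?thesis using b emon_in[OF adm, of n] unfolding banach_fun_space_def
    by (metis less_eq_real_def)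
qed

lemma coef_bound:
  assumes adm: "admissible_space X N" and f: "f \<in> X"
  shows "norm (ecoef f n) * N (emon n) \<le> N f"
proof -
  have b: "banach_fun_space X N" using adm unfolding admissible_space_def by blast
  have "N (\<lambda>z. ecoef f n * emon n z) = norm (ecoef f n) * N (emon n)"
    using b emon_in[OF adm, of n] unfolding banach_fun_space_def by blast
  then show ?thesis using proj(2)[OF adm f, of n] by simp
qed

lemma sum_in_X:
  assumes adm: "admissible_space X N" and fin: "finite I" and u: "\<forall>k\<in>I. u k \<in> X"
  shows "(\<lambda>z. \<Sum>k\<in>I. u k z) \<in> X \<and> N (\<lambda>z. \<Sum>k\<in>I. u k z) \<le> (\<Sum>k\<in>I. N (u k))"
  using fin u
proof (induction I rule: finite_induct)
  case empty
  have b: "banach_fun_space X N" using adm unfolding admissible_space_def by blast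
  then show ?case unfolding banach_fun_space_def by auto
next
  case (insert x F)
  have b: "banach_fun_space X N" using adm unfolding admissible_space_def by blast
  have IH: "(\<lambda>z. \<Sum>k\<in>F. u k z) \<in> X \<and> N (\<lambda>z. \<Sum>k\<in>F. u k z) \<le> (\<Sum>k\<in>F. N (u k))"
    using insert by auto
  have ux: "u x \<in> X" using insert by auto
  have "(\<lambda>z. u x z + (\<Sum>k\<in>F. u k z)) \<in> X \<and>
        N (\<lambda>z. u x z + (\<Sum>k\<in>F. u k z)) \<le> N (u x) + N (\<lambda>z. \<Sum>k\<in>F. u k z)"
  proof -
    have a1: "\<forall>f\<in>X. \<forall>g\<in>X. (\<lambda>z. f z + g z) \<in> X" and
      a2: "\<forall>f\<in>X. \<forall>g\<in>X. N (\<lambda>z. f z + g z) \<le> N f + N g"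
      using b unfolding banach_fun_space_def by blast+
    show ?thesis using a1[rule_format, OF ux, of "\<lambda>z. \<Sum>k\<in>F. u k z"]
      a2[rule_format, OF ux, of "\<lambda>z. \<Sum>k\<in>F. u k z"] IH by auto
  qed
  then show ?case using IH insert by auto
qed

lemma hd_pow: "(deriv^^j) (\<lambda>w::complex. w^k) 0 = (if j = k then fact k else 0)"
  using higher_deriv_power[of j 0 k 0]
  by (auto simp: pochhammer_fact[symmetric] pochhammer_0_left)

lemma hd_poly: "(deriv^^j) (\<lambda>w::complex. \<Sum>k<m. c k * w^k) 0 = (if j < m then c j * fact j else 0)"
proof (induction m)
  case 0 then show ?case by simp
next
  case (Suc m)
  have "(deriv^^j) (\<lambda>w::complex. \<Sum>k<Suc m. c k * w^k) 0 =
        (deriv^^j) (\<lambda>w::complex. (\<Sum>k<m. c k * w^k) + c m * w^m) 0" by simp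
  also have "\<dots> = (deriv^^j) (\<lambda>w::complex. \<Sum>k<m. c k * w^k) 0 + (deriv^^j) (\<lambda>w::complex. c m * w^m) 0"
    by (rule higher_deriv_add[where S=UNIV]) (auto intro!: holomorphic_intros)
  also have "(deriv^^j) (\<lambda>w::complex. c m * w^m) 0 = c m * (deriv^^j) (\<lambda>w::complex. w^m) 0"
    by (rule higher_deriv_cmult[where A=UNIV]) (auto intro!: holomorphic_intros)
  finally show ?case using Suc by (auto simp: hd_pow less_Suc_eq)
qed

lemma diff_in:
  assumes adm: "admissible_space X N" and f: "f \<in> X" and g: "g \<in> X"
  shows "(\<lambda>z. f z - g z) \<in> X" "N (\<lambda>z. f z - g z) = N (\<lambda>z. g z - f z)"
proof -
  have b: "banach_fun_space X N" using adm unfolding admissible_space_def by blast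
  have a1: "\<forall>f\<in>X. \<forall>g\<in>X. (\<lambda>z. f z + g z) \<in> X" and a2: "\<forall>f\<in>X. \<forall>c. (\<lambda>z. c * f z) \<in> X"
    and a3: "\<forall>f\<in>X. \<forall>c. N (\<lambda>z. c * f z) = norm c * N f"
    using b unfolding banach_fun_space_def by blast+
  have mf: "(\<lambda>z. (-1) * f z) \<in> X" "(\<lambda>z. (-1) * g z) \<in> X" using a2 f g by blast+
  have d1: "(\<lambda>z. f z + (-1) * g z) \<in> X" using a1[rule_format, OF f mf(2)] .
  have d2: "(\<lambda>z. g z + (-1) * f z) \<in> X" using a1[rule_format, OF g mf(1)] .
  show "(\<lambda>z. f z - g z) \<in> X" using d1 by simp
  have "N (\<lambda>z. (-1) * (g z + (-1) * f z)) = N (\<lambda>z. g z + (-1) * f z)"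
    using a3[rule_format, OF d2, of "-1"] by simp
  then show "N (\<lambda>z. f z - g z) = N (\<lambda>z. g z - f z)" by (simp add: algebra_simps)
qed

lemma geo_bound:
  fixes s :: real assumes "0 \<le> s" "s < 1"
  shows "(\<Sum>k\<in>{n..<n+d}. s^k) \<le> s^n / (1-s)"
proof -
  have "(1-s) * (\<Sum>k\<in>{n..<n+d}. s^k) = s^n - s^(n+d)"
  proof (induction d)
    case (Suc d)
    have "(1-s) * (\<Sum>k\<in>{n..<n+Suc d}. s^k) = (1-s) * (\<Sum>k\<in>{n..<n+d}. s^k) + (1-s) * s ^ (n+d)"
      by (simp add: algebra_simps)
    also have "\<dots> = s^n - s^(n+d) + (1-s) * s ^ (n+d)" using Suc.IH by simp
    also have "\<dots> = s^n - s^(n + Suc d)" by (simp add: algebra_simps)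
    finally show ?case .
  qed simp
  then have "(1-s) * (\<Sum>k\<in>{n..<n+d}. s^k) \<le> s^n" using assms by simp
  then show ?thesis using assms by (simp add: field_simps)
qed

lemma emon_growth:
  assumes adm: "admissible_space X N" and r0: "0 < \<rho>" and r1: "\<rho> < 1"
  shows "finite {n. N (emon n) \<le> \<rho>^n}"
proof (rule ccontr)
  define S where "S = {n. N (emon n) \<le> \<rho>^n}"
  assume "infinite {n. N (emon n) \<le> \<rho>^n}"
  then have inf: "infinite S" unfolding S_def .
  have b: "banach_fun_space X N" using adm unfolding admissible_space_def by blast
  have a2: "\<forall>f\<in>X. \<forall>c. (\<lambda>z. c * f z) \<in> X"
    and a3: "\<forall>f\<in>X. \<forall>c. N (\<lambda>z. c * f z) = norm c * N f"
    and a4: "\<forall>f\<in>X. N f \<ge> 0"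
    and cauchy: "\<forall>F::nat \<Rightarrow> complex \<Rightarrow> complex. (\<forall>n. F n \<in> X) \<longrightarrow>
        (\<forall>e>0. \<exists>M. \<forall>m\<ge>M. \<forall>n\<ge>M. N (\<lambda>z. F m z - F n z) < e) \<longrightarrow>
        (\<exists>f\<in>X. (\<lambda>n. N (\<lambda>z. F n z - f z)) \<longlonglongrightarrow> 0)"
    using b unfolding banach_fun_space_def by blast+
  have holX: "\<And>f. f \<in> X \<Longrightarrow> f holomorphic_on ball 0 1"
    using adm unfolding admissible_space_def by blast
  define s where "s = sqrt \<rho>"
  have s0: "0 < s" and s1: "s < 1" and ss: "\<rho> = s * s" using r0 r1 by (auto simp: s_def)
  define c where "c k = (if k \<in> S then complex_of_real (1 / s^k) else 0)" for k
  define F where "F m = (\<lambda>z. \<Sum>k<m. c k * emon k z)" for m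
  have tin: "(\<lambda>z. c k * emon k z) \<in> X" for k using a2 emon_in[OF adm] by blast
  have tN: "N (\<lambda>z. c k * emon k z) \<le> s^k" for k
  proof -
    have e: "N (\<lambda>z. c k * emon k z) = norm (c k) * N (emon k)" using a3 emon_in[OF adm] by blast
    show ?thesis
    proof (cases "k \<in> S")
      case True
      then have "N (emon k) \<le> s^k * s^k" unfolding S_def ss by (simp add: power_mult_distrib)
      then have "(1/s^k) * N (emon k) \<le> (1/s^k) * (s^k * s^k)"
        using s0 by (intro mult_left_mono) auto
      then show ?thesis using e True s0 by (simp add: c_def norm_divide norm_power)
    next
      case False then show ?thesis using e s0 by (simp add: c_def)
    qed
  qed
  have FX: "F m \<in> X" for m
    using sum_in_X[OF adm finite_lessThan, of m "\<lambda>k z. c k * emon k z"] tin unfolding F_def by blast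
  have Nd: "N (\<lambda>z. F m z - F n z) \<le> s^n / (1-s)" if "n \<le> m" for m n
  proof -
    define d where "d = m - n"
    have m: "m = n + d" using that by (simp add: d_def)
    have "(\<lambda>z. F m z - F n z) = (\<lambda>z. \<Sum>k\<in>{n..<m}. c k * emon k z)"
    proof
      fix z
      show "F m z - F n z = (\<Sum>k\<in>{n..<m}. c k * emon k z)"
        unfolding F_def lessThan_atLeast0
        using sum.atLeastLessThan_concat[of 0 n m "\<lambda>k. c k * emon k z"] that
        by (metis add_diff_cancel_left' zero_le)
    qed
    moreover have "N (\<lambda>z. \<Sum>k\<in>{n..<m}. c k * emon k z) \<le> (\<Sum>k\<in>{n..<m}. N (\<lambda>z. c k * emon k z))"
      using sum_in_X[OF adm finite_atLeastLessThan, of n m "\<lambda>k z. c k * emon k z"] tin by blast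
    moreover have "(\<Sum>k\<in>{n..<m}. N (\<lambda>z. c k * emon k z)) \<le> (\<Sum>k\<in>{n..<m}. s^k)"
      by (intro sum_mono tN)
    moreover have "(\<Sum>k\<in>{n..<m}. s^k) \<le> s^n / (1-s)" unfolding m using geo_bound[of s n d] s0 s1 by linarith
    ultimately show ?thesis by (metis (no_types) order_trans)
  qed
  have "\<forall>e>0. \<exists>M. \<forall>m\<ge>M. \<forall>n\<ge>M. N (\<lambda>z. F m z - F n z) < e"
  proof (intro allI impI)
    fix e :: real assume e: "e > 0"
    obtain M where M: "s^M < e * (1-s)" using real_arch_pow_inv[of "e*(1-s)" s] e s1 by auto
    have "N (\<lambda>z. F m z - F n z) < e" if "m \<ge> M" "n \<ge> M" for m n
    proof -
      have p: "s^k / (1-s) < e" if "k \<ge> M" for k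
      proof -
        have "s^k \<le> s^M" using that s0 s1 by (intro power_decreasing) auto
        then show ?thesis using M s1 by (simp add: field_simps)
      qed
      show ?thesis
      proof (cases "n \<le> m")
        case True then show ?thesis using Nd[OF True] p[OF that(2)] by linarith
      next
        case False
        then have "m \<le> n" by simp
        then show ?thesis using Nd[of m n] p[OF that(1)] diff_in(2)[OF adm FX FX, of m n] by linarith
      qed
    qed
    then show "\<exists>M. \<forall>m\<ge>M. \<forall>n\<ge>M. N (\<lambda>z. F m z - F n z) < e" by blast
  qed
  then obtain G where GX: "G \<in> X" and lim: "(\<lambda>n. N (\<lambda>z. F n z - G z)) \<longlonglongrightarrow> 0"
    using cauchy FX by blast
  have holG: "G holomorphic_on ball 0 1" using holX GX .
  have coefG: "ecoef G j = c j" if j: "j \<in> S" for j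
  proof -
    have le: "norm (c j - ecoef G j) * N (emon j) \<le> N (\<lambda>z. F m z - G z)" if m: "m > j" for m
    proof -
      have "(deriv^^j) (F m) 0 = (deriv^^j) (\<lambda>w::complex. \<Sum>k<m. c k * w^k) 0"
        apply (rule higher_deriv_transform_within_open[where S="ball 0 1"])
        apply (rule holX[OF FX])
        apply (intro holomorphic_intros)
        apply simp
        apply simp
        apply (simp add: F_def emon_def restrict_disc_def)
        done
      then have cF: "ecoef (F m) j = c j" using m by (simp add: ecoef_def hd_poly)
      have "ecoef (\<lambda>z. F m z - G z) j = ecoef (F m) j - ecoef G j"
        unfolding ecoef_def
        by (subst higher_deriv_diff[where S="ball 0 1"]) (auto intro: holX FX GX simp: diff_divide_distrib)
      then show ?thesis using coef_bound[OF adm diff_in(1)[OF adm FX GX], of m j] cF by simp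
    qed
    have "norm (c j - ecoef G j) * N (emon j) \<le> 0"
      by (rule LIMSEQ_le_const[OF lim]) (use le in \<open>auto intro!: exI[of _ "Suc j"]\<close>)
    then have "norm (c j - ecoef G j) \<le> 0" using emon_pos[OF adm, of j]
      by (simp add: mult_le_0_iff)
    then show ?thesis by simp
  qed
  define s2 where "s2 = sqrt s"
  have "s^2 \<le> s" using s0 s1 by (simp add: power2_eq_square mult_left_le)
  then have s20: "s \<le> s2" unfolding s2_def by (rule real_le_rsqrt)
  have s21: "s2 < 1" using s0 s1 unfolding s2_def by simp
  have "(\<lambda>k. (deriv ^^ k) G 0 / fact k * (of_real s2 - 0)^k) sums G (of_real s2)"
    by (rule holomorphic_power_series[OF holG]) (use s20 s21 s0 in auto)
  then have "(\<lambda>k. (deriv ^^ k) G 0 / fact k * (of_real s2 - 0)^k) \<longlonglongrightarrow> 0"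
    using summable_LIMSEQ_zero sums_summable by blast
  then obtain M where M: "\<And>k. k \<ge> M \<Longrightarrow> norm ((deriv ^^ k) G 0 / fact k * (of_real s2 - 0)^k) < 1"
    unfolding LIMSEQ_iff by (metis diff_zero zero_less_one)
  obtain k where k: "k \<ge> M" "k \<in> S" using inf unfolding infinite_nat_iff_unbounded_le by blast
  have "norm ((deriv ^^ k) G 0 / fact k * (of_real s2 - 0)^k) = s2^k / s^k"
    using coefG[OF k(2)] k(2) s0 s20
    by (simp add: ecoef_def c_def norm_mult norm_power norm_divide)
  also have "\<dots> \<ge> 1" using s0 s20 by (simp add: power_mono)
  finally show False using M[OF k(1)] by simp
qed

theorem lemma4p3:
  fixes X :: "(complex \<Rightarrow> complex) set" and N :: "(complex \<Rightarrow> complex) \<Rightarrow> real"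
    and K :: "complex set"
  assumes "admissible_space X N"
    and "compact K" and "K \<subseteq> ball 0 1"
  shows "\<exists>C::real. \<forall>f\<in>X. \<forall>z\<in>K. norm (f z) \<le> C * N f"
proof (cases "K = {}")
  case True then show ?thesis by auto
next
  case False
  note adm = assms(1)
  have holX: "\<And>f. f \<in> X \<Longrightarrow> f holomorphic_on ball 0 1"
    using adm unfolding admissible_space_def by blast
  have cn: "continuous_on K norm" by (intro continuous_intros)
  obtain z0 where z0: "z0 \<in> K" "\<forall>z\<in>K. norm z \<le> norm z0"
    using continuous_attains_sup[OF assms(2) False cn] by blast
  define r where "r = norm z0"
  have "z0 \<in> ball 0 1" using z0(1) assms(3) by blast
  then have r1: "r < 1" unfolding r_def by simp
  have r0: "0 \<le> r" unfolding r_def by simp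
  define \<rho> where "\<rho> = (1 + r) / 2"
  have p0: "0 < \<rho>" using r0 r1 unfolding \<rho>_def by (simp add: field_simps)
  have p1: "\<rho> < 1" using r0 r1 unfolding \<rho>_def by (simp add: field_simps)
  have rp: "r < \<rho>" using r0 r1 unfolding \<rho>_def by (simp add: field_simps)
  have fin: "finite {n. N (emon n) \<le> \<rho>^n}" using emon_growth[OF adm p0 p1] .
  then obtain M0 where M0': "{n. N (emon n) \<le> \<rho>^n} \<subseteq> {..<M0}"
    unfolding finite_nat_iff_bounded by blast
  have M0: "\<forall>n\<in>{n. N (emon n) \<le> \<rho>^n}. n < M0" using M0' by auto
  define w where "w n = r^n / N (emon n)" for n
  have "summable (\<lambda>n. (r/\<rho>)^n)" using r0 rp p0 by (intro summable_geometric) auto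
  moreover have "norm (w n) \<le> (r/\<rho>)^n" if "n \<ge> M0" for n
  proof -
    have "\<rho>^n < N (emon n)" using M0 that by (metis (mono_tags, lifting) mem_Collect_eq not_le leD)
    moreover have pn: "0 < \<rho>^n" using p0 by simp
    moreover have "0 \<le> r^n" using r0 by simp
    ultimately have "r^n / N (emon n) \<le> r^n / \<rho>^n"
      by (intro divide_left_mono mult_pos_pos) auto
    then show ?thesis using r0 emon_pos[OF adm, of n] by (simp add: w_def power_divide)
  qed
  ultimately have sw: "summable w" by (rule summable_comparison_test')
  show ?thesis
  proof (intro exI ballI)
    fix f z assume f: "f \<in> X" and z: "z \<in> K"
    have zr: "norm z \<le> r" using z0 z unfolding r_def by auto
    have zb: "z \<in> ball 0 1" using z assms(3) by auto
    have ser: "(\<lambda>n. (deriv^^n) f 0 / fact n * (z-0)^n) sums f z"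
      by (rule holomorphic_power_series[OF holX[OF f] zb])
    have bd: "norm ((deriv^^n) f 0 / fact n * (z-0)^n) \<le> N f * w n" for n
    proof -
      have Np: "N (emon n) > 0" using emon_pos[OF adm] .
      have c1: "norm (ecoef f n) \<le> N f / N (emon n)"
        using coef_bound[OF adm f, of n] Np by (simp add: pos_le_divide_eq)
      moreover have "0 \<le> N f / N (emon n)" using order_trans[OF norm_ge_zero c1] .
      moreover have "norm z ^ n \<le> r ^ n" using zr by (intro power_mono) auto
      ultimately have "norm (ecoef f n) * norm z ^ n \<le> (N f / N (emon n)) * r^n"
        by (intro mult_mono) auto
      then show ?thesis by (simp add: ecoef_def w_def norm_mult norm_power norm_divide mult.commute mult.left_commute)
    qed
    have "norm (f z) \<le> (\<Sum>n. N f * w n)"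
      using norm_suminf_le[OF bd summable_mult[OF sw]] sums_unique[OF ser] by simp
    also have "\<dots> = suminf w * N f" using suminf_mult[OF sw] by simp
    finally show "norm (f z) \<le> suminf w * N f" .
  qed
qed

end
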